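(* Let $n\geq 3$ and $k\geq 2$ be integers and let $LCG(n,k)$ be the layer cycle graph with parameters $n,k$. Then the metric dimension of $LCG(n,k)$ is $\beta(LCG(n,k))=n(n-1)^{k-2}$.
   Context: All graphs are simple and connected; $d(u,v)$ is the shortest-path distance. For an ordered set $R=\{r_1,\dots,r_m\}$ of vertices, $r(u\,|\,R)=(d(u,r_1),\dots,d(u,r_m))$. $R$ is a resolving set of $G$ if distinct vertices of $G$ have distinct representations $r(\cdot|R)$; the metric dimension $\beta(G)$ is the minimum size of a resolving set. The layer cycle graph $LCG(n,k)$ ($n\geq 3$, $k\geq 2$) is constructed as follows. Its vertex set is partitioned into layers $U_1,\dots,U_k$. Layer $U_1$ is a cycle $C_n$ on vertices $1,\dots,n$. For $2\leq p\leq k$, layer $U_p$ consists of $n(n-1)^{p-2}$ vertex-disjoint cycles of length $n$, each with a distinguished vertex called its head vertex. Each vertex of $U_1$ is joined by an edge to the head vertex of exactly one cycle of $U_2$ (distinct vertices to distinct cycles). For $2\leq p<k$, each of the $n-1$ non-head vertices of each cycle of $U_p$ is joined by an edge to the head vertex of exactly one cycle of $U_{p+1}$, in such a way that every cycle of $U_{p+1}$ has its head joined to exactly one such vertex. There are no other edges. Thus $LCG(n,k)$ has $n+\sum_{p=2}^{k}n^2(n-1)^{p-2}$ vertices. *)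

theory Defs
  imports Main
begin

definition walk_of_len :: "'a set \<Rightarrow> ('a \<Rightarrow> 'a \<Rightarrow> bool) \<Rightarrow> 'a \<Rightarrow> 'a \<Rightarrow> nat \<Rightarrow> bool" where
  "walk_of_len V E u v m \<longleftrightarrow>
     (\<exists>ps. length ps = Suc m \<and> hd ps = u \<and> last ps = v \<and> set ps \<subseteq> V \<and>
           (\<forall>i < m. E (ps ! i) (ps ! Suc i)))"

definition gdist :: "'a set \<Rightarrow> ('a \<Rightarrow> 'a \<Rightarrow> bool) \<Rightarrow> 'a \<Rightarrow> 'a \<Rightarrow> nat" where
  "gdist V E u v = (LEAST m. walk_of_len V E u v m)"

definition resolving :: "'a set \<Rightarrow> ('a \<Rightarrow> 'a \<Rightarrow> bool) \<Rightarrow> 'a set \<Rightarrow> bool" where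
  "resolving V E R \<longleftrightarrow> R \<subseteq> V \<and>
     (\<forall>u\<in>V. \<forall>v\<in>V. (\<forall>r\<in>R. gdist V E u r = gdist V E v r) \<longrightarrow> u = v)"

definition metric_dim :: "'a set \<Rightarrow> ('a \<Rightarrow> 'a \<Rightarrow> bool) \<Rightarrow> nat" where
  "metric_dim V E = (LEAST m. \<exists>R. finite R \<and> resolving V E R \<and> card R = m)"

text \<open>Vertex (xs, i): xs = [] encodes layer U_1, i < n the position on the cycle C_n.
  For layer p \<ge> 2, xs has length p-1 and encodes the cycle: xs = [a] is the cycle of U_2
  attached to vertex a of U_1; xs @ [j] (j a non-head position 1..n-1) is the cycle of
  U_(p+1) attached to vertex j of cycle xs. Position 0 is the head vertex.\<close>

definition lcg_V :: "nat \<Rightarrow> nat \<Rightarrow> (nat list \<times> nat) set" where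
  "lcg_V n k = {(xs, i). i < n \<and> length xs \<le> k - 1 \<and> (\<forall>a \<in> set xs. a < n)
                         \<and> (\<forall>a \<in> set (tl xs). a \<noteq> 0)}"

definition lcg_adj0 :: "nat \<Rightarrow> nat list \<times> nat \<Rightarrow> nat list \<times> nat \<Rightarrow> bool" where
  "lcg_adj0 n x y \<longleftrightarrow>
     (fst x = fst y \<and> snd y = (snd x + 1) mod n) \<or>
     (fst y = fst x @ [snd x] \<and> snd y = 0 \<and> (fst x = [] \<or> snd x \<noteq> 0))"

definition lcg_E :: "nat \<Rightarrow> nat \<Rightarrow> nat list \<times> nat \<Rightarrow> nat list \<times> nat \<Rightarrow> bool" where
  "lcg_E n k x y \<longleftrightarrow> x \<in> lcg_V n k \<and> y \<in> lcg_V n k \<and> (lcg_adj0 n x y \<or> lcg_adj0 n y x)"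

end

theory Submission
  imports Defs
begin


definition cdist :: "nat \<Rightarrow> nat \<Rightarrow> nat \<Rightarrow> nat" where
  "cdist n a t = min (if a \<le> t then t - a else a - t) (n - (if a \<le> t then t - a else a - t))"

lemma modform: "a < n \<Longrightarrow> t < (n::nat) \<Longrightarrow> (t + n - a) mod n = (if a \<le> t then t - a else t + n - a)"
proof (cases "a \<le> t")
  case True
  assume "t < n"
  then have "t + n - a = (t - a) + n" using True by simp
  then have "(t + n - a) mod n = (t - a) mod n" by simp
  then show ?thesis using True \<open>t < n\<close> by simp
next
  case False
  assume "a < n"
  then show ?thesis using False by simp
qed

lemma cdist_le: "a < n \<Longrightarrow> t < (n::nat) \<Longrightarrow> cdist n a t \<le> (t + n - a) mod n \<and> cdist n a t \<le> (a + n - t) mod n"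
proof -
  assume a: "a < n" and t: "t < n"
  show ?thesis
  proof (cases "a \<le> t")
    case True
    then have 1: "cdist n a t = min (t - a) (n - (t - a))" by (simp add: cdist_def)
    have 2: "(t + n - a) mod n = t - a" using modform[OF a t] True by simp
    have 3: "(a + n - t) mod n = (if t \<le> a then a - t else a + n - t)" using modform[OF t a] .
    show ?thesis using 1 2 3 True by (cases "t \<le> a") (auto simp: min_def)
  next
    case False
    then have 1: "cdist n a t = min (a - t) (n - (a - t))" by (simp add: cdist_def)
    have 2: "(a + n - t) mod n = a - t" using modform[OF t a] False by simp
    have 3: "(t + n - a) mod n = t + n - a" using modform[OF a t] False by simp
    show ?thesis using 1 2 3 False by (auto simp: min_def)
  qed
qed

lemma min_lip: "(x::nat) \<le> y + 1 \<Longrightarrow> y \<le> x + 1 \<Longrightarrow> x' \<le> y' + 1 \<Longrightarrow> y' \<le> x' + 1 \<Longrightarrow>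
   min x x' \<le> min y y' + 1 \<and> min y y' \<le> min x x' + 1"
  by (simp add: min_def)

lemma cdist_lip: "a < (n::nat) \<Longrightarrow> t < n \<Longrightarrow>
   cdist n ((a+1) mod n) t \<le> cdist n a t + 1 \<and> cdist n a t \<le> cdist n ((a+1) mod n) t + 1"
proof -
  assume a: "a < n" and t: "t < n"
  show ?thesis
  proof (cases "a + 1 = n")
    case True
    then have m: "(a+1) mod n = 0" by simp
    have c0: "cdist n 0 t = min (n - t) t" by (simp add: cdist_def min.commute)
    have ca: "cdist n a t = min (a - t) (n - (a - t))" using True t by (simp add: cdist_def)
    have "n - t \<le> a - t + 1" "a - t \<le> n - t + 1" "t \<le> n - (a - t) + 1" "n - (a - t) \<le> t + 1"
      using True t by simp_all
    then have L: "min (n - t) t \<le> min (a - t) (n - (a - t)) + 1 \<and> min (a - t) (n - (a - t)) \<le> min (n - t) t + 1"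
      by (rule min_lip)
    show ?thesis unfolding m c0 ca by (rule L)
  next
    case False
    then have m: "(a+1) mod n = a + 1" using a by simp
    show ?thesis
    proof (cases "a < t")
      case True
      have c1: "cdist n (a+1) t = min (t - (a+1)) (n - (t - (a+1)))" using True by (simp add: cdist_def)
      have c2: "cdist n a t = min (t - a) (n - (t - a))" using True by (simp add: cdist_def)
      have "t - (a+1) \<le> t - a + 1" "t - a \<le> t - (a+1) + 1" "n - (t - (a+1)) \<le> n - (t - a) + 1"
        "n - (t - a) \<le> n - (t - (a+1)) + 1" using True t by simp_all
      then have L: "min (t - (a+1)) (n - (t - (a+1))) \<le> min (t - a) (n - (t - a)) + 1 \<and> min (t - a) (n - (t - a)) \<le> min (t - (a+1)) (n - (t - (a+1))) + 1"
        by (rule min_lip)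
      show ?thesis unfolding m c1 c2 by (rule L)
    next
      case False
      have c1: "cdist n (a+1) t = min (a + 1 - t) (n - (a + 1 - t))" using False by (simp add: cdist_def)
      have c2: "cdist n a t = min (a - t) (n - (a - t))" using False by (simp add: cdist_def)
      have "a + 1 - t \<le> a - t + 1" "a - t \<le> a + 1 - t + 1" "n - (a + 1 - t) \<le> n - (a - t) + 1"
        "n - (a - t) \<le> n - (a + 1 - t) + 1" using False t a \<open>a + 1 \<noteq> n\<close> by simp_all
      then have L: "min (a + 1 - t) (n - (a + 1 - t)) \<le> min (a - t) (n - (a - t)) + 1 \<and> min (a - t) (n - (a - t)) \<le> min (a + 1 - t) (n - (a + 1 - t)) + 1"
        by (rule min_lip)
      show ?thesis unfolding m c1 c2 by (rule L)
    qed
  qed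
qed

lemma cdist0: "i < (n::nat) \<Longrightarrow> cdist n i 0 = min i (n - i)"
  by (simp add: cdist_def)

lemma cdist1: "1 \<le> i \<Longrightarrow> i < (n::nat) \<Longrightarrow> cdist n i 1 = min (i - 1) (n - (i - 1))"
  by (simp add: cdist_def)

lemma cdist_sep_aux: "3 \<le> (n::nat) \<Longrightarrow> 1 \<le> i \<Longrightarrow> i + i < n \<Longrightarrow> cdist n i 1 \<noteq> cdist n (n - i) 1"
proof -
  assume n: "3 \<le> n" and i: "1 \<le> i" "i + i < n"
  have a: "cdist n i 1 = i - 1" using cdist1[of i n] i by (simp add: min_def)
  have b: "cdist n (n - i) 1 = min (n - i - 1) (n - (n - i - 1))" using cdist1[of "n - i" n] i by simp
  have "n - i - 1 \<ge> i" "n - (n - i - 1) \<ge> i" using i by simp_all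
  then have "cdist n (n - i) 1 \<ge> i" using b by simp
  then show ?thesis using a i by simp
qed

lemma cdist_sep: "3 \<le> n \<Longrightarrow> i < n \<Longrightarrow> j < n \<Longrightarrow> cdist n i 1 = cdist n j 1 \<Longrightarrow> cdist n i 0 = cdist n j 0 \<Longrightarrow> i = j"
proof (rule ccontr)
  assume n: "3 \<le> n" and ij: "i < n" "j < n" and e1: "cdist n i 1 = cdist n j 1"
    and e0: "cdist n i 0 = cdist n j 0" and ne: "i \<noteq> j"
  have m: "min i (n - i) = min j (n - j)" using e0 cdist0 ij by simp
  have j: "j = n - i" using m ne ij by (simp add: min_def split: if_splits)
  have i0: "i \<noteq> 0" using j ne ij by auto
  have j0: "j \<noteq> 0" using j ne ij by auto
  show False
  proof (cases "i + i < n")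
    case True
    then show ?thesis using cdist_sep_aux[OF n _ True] i0 e1 j by simp
  next
    case False
    then have "j + j < n" using j ne ij by arith
    moreover have "i = n - j" using j ij by simp
    ultimately show ?thesis using cdist_sep_aux[OF n _ \<open>j + j < n\<close>] j0 e1 by simp
  qed
qed

lemma refl_arith: "3 \<le> (n::nat) \<Longrightarrow> a < n \<Longrightarrow> (n - a) mod n = ((n - (a+1) mod n) mod n + 1) mod n"
proof -
  assume n: "3 \<le> n" and a: "a < n"
  show ?thesis
  proof (cases "a + 1 = n")
    case True
    then have "(a+1) mod n = 0" "n - a = 1" by simp_all
    then show ?thesis using n by simp
  next
    case False
    then have m: "(a+1) mod n = a + 1" using a by simp
    have r: "(n - (a + 1)) mod n = n - (a + 1)" using n by simp
    show ?thesis
    proof (cases "a = 0")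
      case True then show ?thesis using m r n by simp
    next
      case False
      then have "n - a < n" using a by simp
      then have "(n - a) mod n = n - a" by simp
      moreover have "n - (a + 1) + 1 = n - a" using a \<open>a + 1 \<noteq> n\<close> by simp
      ultimately show ?thesis using m r by simp
    qed
  qed
qed

lemma refl_inv: "a < (n::nat) \<Longrightarrow> (n - (n - a) mod n) mod n = a"
  by (cases "a = 0") auto

lemma cdist_eq: "a < n \<Longrightarrow> t < (n::nat) \<Longrightarrow> cdist n a t = min ((t + n - a) mod n) ((a + n - t) mod n)"
  by (auto simp: modform cdist_def min_def)

lemma cdist_self: "cdist n t t = 0"
  by (simp add: cdist_def)



lemma walk0: "walk_of_len V E u v 0 \<longleftrightarrow> u = v \<and> u \<in> V"
  unfolding walk_of_len_def
  by (auto simp: length_Suc_conv)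

lemma walk_cons:
  assumes "E u w" "u \<in> V" "walk_of_len V E w x m"
  shows "walk_of_len V E u x (Suc m)"
proof -
  obtain ps where ps: "length ps = Suc m" "hd ps = w" "last ps = x" "set ps \<subseteq> V"
    "\<forall>i<m. E (ps ! i) (ps ! Suc i)" using assms(3) unfolding walk_of_len_def by blast
  have ne: "ps \<noteq> []" using ps(1) by auto
  have "\<forall>i<Suc m. E ((u#ps) ! i) ((u#ps) ! Suc i)"
  proof (intro allI impI)
    fix i assume "i < Suc m"
    show "E ((u#ps) ! i) ((u#ps) ! Suc i)"
    proof (cases i)
      case 0 then show ?thesis using assms(1) ps(2) ne by (simp add: hd_conv_nth)
    next
      case (Suc j) then show ?thesis using ps(5) \<open>i < Suc m\<close> by simp
    qed
  qed
  then show ?thesis unfolding walk_of_len_def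
    using ps ne assms(2) by (intro exI[of _ "u#ps"]) auto
qed

lemma walk_uncons:
  assumes "walk_of_len V E u x (Suc m)"
  shows "\<exists>w. E u w \<and> u \<in> V \<and> walk_of_len V E w x m"
proof -
  obtain ps where ps: "length ps = Suc (Suc m)" "hd ps = u" "last ps = x" "set ps \<subseteq> V"
    "\<forall>i<Suc m. E (ps ! i) (ps ! Suc i)" using assms unfolding walk_of_len_def by blast
  have ne: "ps \<noteq> []" "tl ps \<noteq> []" using ps(1) by (auto simp: length_Suc_conv)
  have e0: "E u (ps ! 1)" using ps(5)[rule_format, of 0] ps(2) ne by (simp add: hd_conv_nth)
  have uV: "u \<in> V" using ps(2,4) ne by auto
  have "walk_of_len V E (ps ! 1) x m" unfolding walk_of_len_def
  proof (intro exI[of _ "tl ps"] conjI)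
    show "length (tl ps) = Suc m" using ps(1) by simp
    show "hd (tl ps) = ps ! 1" using ne by (cases ps) (auto simp: hd_conv_nth)
    show "last (tl ps) = x" using ne ps(3) by (simp add: last_tl)
    show "set (tl ps) \<subseteq> V" using ps(4) ne by (meson list.set_sel(2) subset_iff)
    show "\<forall>i<m. E (tl ps ! i) (tl ps ! Suc i)" using ps(5) ps(1) by (simp add: nth_tl)
  qed
  then show ?thesis using e0 uV by blast
qed

lemma walkV: "walk_of_len V E u x m \<Longrightarrow> u \<in> V \<and> x \<in> V"
  unfolding walk_of_len_def by (metis hd_in_set last_in_set list.size(3) nat.distinct(1) subsetD)

lemma walk_app_gen: "walk_of_len V E u v a \<Longrightarrow> walk_of_len V E v x b \<Longrightarrow> walk_of_len V E u x (a + b)"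
proof (induction a arbitrary: u)
  case 0
  from 0(1) have "u = v" by (simp only: walk0)
  with 0(2) show ?case by simp
next
  case (Suc a)
  from walk_uncons[OF Suc.prems(1)] obtain w where
    w: "E u w" "u \<in> V" "walk_of_len V E w v a" by blast
  have "walk_of_len V E w x (a + b)" using Suc.IH[OF w(3) Suc.prems(2)] .
  then have "walk_of_len V E u x (Suc (a + b))" using walk_cons[of E u w V x "a + b"] w by blast
  then show ?case by simp
qed

lemma walk_edge_gen: "E u v \<Longrightarrow> u \<in> V \<Longrightarrow> v \<in> V \<Longrightarrow> walk_of_len V E u v 1"
  using walk_cons[of E u v V v 0] by (simp add: walk0)

locale sg =
  fixes V :: "'a set" and E :: "'a \<Rightarrow> 'a \<Rightarrow> bool" and root :: 'a
  assumes sym: "E x y \<Longrightarrow> E y x"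
    and inV: "E x y \<Longrightarrow> x \<in> V \<and> y \<in> V"
    and root: "root \<in> V"
    and reach: "x \<in> V \<Longrightarrow> \<exists>m. walk_of_len V E x root m"
begin

abbreviation "W \<equiv> walk_of_len V E"
abbreviation "d \<equiv> gdist V E"

lemmas walk_app = walk_app_gen[of V E]

lemma walk_edge: "E u v \<Longrightarrow> W u v 1"
  using walk_cons[of E u v V v 0] inV[of u v] by (simp add: walk0)

lemma walk_rev: "W u v m \<Longrightarrow> W v u m"
proof (induction m arbitrary: u)
  case 0 then show ?case by (auto simp add: walk0)
next
  case (Suc m)
  from walk_uncons[OF Suc.prems(1)] obtain w where "E u w" "u \<in> V" "W w v m" by blast
  have "W v w m" using Suc.IH[OF \<open>W w v m\<close>] .
  moreover have "W w u 1" using walk_edge sym \<open>E u w\<close> by blast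
  ultimately show ?case using walk_app[of v w m u 1] by simp
qed

lemma conn: "x \<in> V \<Longrightarrow> y \<in> V \<Longrightarrow> \<exists>m. W x y m"
proof -
  assume "x \<in> V" "y \<in> V"
  obtain a where a: "W x root a" using reach[OF \<open>x \<in> V\<close>] by blast
  obtain b where b: "W y root b" using reach[OF \<open>y \<in> V\<close>] by blast
  have "W x y (a + b)" using walk_app[OF a walk_rev[OF b]] .
  then show ?thesis by blast
qed

lemma d_le: "W u v m \<Longrightarrow> d u v \<le> m"
  unfolding gdist_def by (rule Least_le)

lemma d_walk: "u \<in> V \<Longrightarrow> v \<in> V \<Longrightarrow> W u v (d u v)"
proof -
  assume "u \<in> V" "v \<in> V"
  then obtain m where "W u v m" using conn by blast
  then show ?thesis unfolding gdist_def by (rule LeastI)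
qed

lemma d_refl: "u \<in> V \<Longrightarrow> d u u = 0"
proof -
  assume "u \<in> V"
  then have "W u u 0" by (simp add: walk0)
  then show ?thesis using d_le[of u u 0] by simp
qed

lemma d_zero: "u \<in> V \<Longrightarrow> v \<in> V \<Longrightarrow> d u v = 0 \<Longrightarrow> u = v"
proof -
  assume "u \<in> V" "v \<in> V" "d u v = 0"
  then have "W u v 0" using d_walk[of u v] by simp
  then show ?thesis by (simp only: walk0)
qed

lemma d_sym: "u \<in> V \<Longrightarrow> v \<in> V \<Longrightarrow> d u v = d v u"
proof -
  assume "u \<in> V" "v \<in> V"
  have "d v u \<le> d u v" using d_le[OF walk_rev[OF d_walk[OF \<open>u \<in> V\<close> \<open>v \<in> V\<close>]]] .
  moreover have "d u v \<le> d v u" using d_le[OF walk_rev[OF d_walk[OF \<open>v \<in> V\<close> \<open>u \<in> V\<close>]]] .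
  ultimately show ?thesis by (rule antisym[rotated])
qed

lemma d_tri: "u \<in> V \<Longrightarrow> v \<in> V \<Longrightarrow> w \<in> V \<Longrightarrow> d u w \<le> d u v + d v w"
proof -
  assume "u \<in> V" "v \<in> V" "w \<in> V"
  show ?thesis using d_le[OF walk_app[OF d_walk[OF \<open>u \<in> V\<close> \<open>v \<in> V\<close>] d_walk[OF \<open>v \<in> V\<close> \<open>w \<in> V\<close>]]] .
qed

lemma d_edge: "E u v \<Longrightarrow> d u v \<le> 1"
  using d_le[OF walk_edge] .

lemma lower:
  assumes "\<And>x y. E x y \<Longrightarrow> \<phi> x \<le> \<phi> y + (1::nat)" "\<phi> r = 0"
  shows "W v r m \<Longrightarrow> \<phi> v \<le> m"
proof (induction m arbitrary: v)
  case 0 then have "v = r" by (simp only: walk0)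
  then show ?case using assms(2) by simp
next
  case (Suc m)
  from walk_uncons[OF Suc.prems(1)] obtain w where "E v w" "W w r m" by blast
  have "\<phi> w \<le> m" using Suc.IH[OF \<open>W w r m\<close>] .
  then show ?case using assms(1)[OF \<open>E v w\<close>] by linarith
qed

lemma lower_d:
  assumes "\<And>x y. E x y \<Longrightarrow> \<phi> x \<le> \<phi> y + (1::nat)" "\<phi> r = 0" "v \<in> V" "r \<in> V"
  shows "\<phi> v \<le> d v r"
  using lower[of \<phi> r v "d v r", OF assms(1,2) d_walk[OF assms(3,4)]] by blast

lemma cut_walk:
  assumes ex: "\<And>a b. E a b \<Longrightarrow> a \<in> S \<Longrightarrow> b \<notin> S \<Longrightarrow> a = g" and gV: "g \<in> V"
  shows "W x y m \<Longrightarrow> x \<in> S \<Longrightarrow> y \<notin> S \<Longrightarrow> d x g + d g y \<le> m"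
proof (induction m arbitrary: x)
  case 0 then have "x = y" by (simp only: walk0)
  then show ?case using 0 by simp
next
  case (Suc m)
  from walk_uncons[OF Suc.prems(1)] obtain w where w: "E x w" "x \<in> V" "W w y m" by blast
  have wV: "w \<in> V" using inV[OF w(1)] by blast
  show ?case
  proof (cases "w \<in> S")
    case True
    have IH: "d w g + d g y \<le> m" using Suc.IH[OF w(3) True Suc.prems(3)] .
    have "d x g \<le> d x w + d w g" using d_tri[OF w(2) wV gV] .
    moreover have "d x w \<le> 1" using d_edge[OF w(1)] .
    ultimately show ?thesis using IH by linarith
  next
    case False
    have "x = g" using ex[OF w(1) Suc.prems(2) False] .
    have "W x y (Suc m)" using Suc.prems(1) .
    then have "d g y \<le> Suc m" using d_le \<open>x = g\<close> by blast
    moreover have "d x g = 0" using d_refl[OF gV] \<open>x = g\<close> by simp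
    ultimately show ?thesis by simp
  qed
qed

lemma cut:
  assumes ex: "\<And>a b. E a b \<Longrightarrow> a \<in> S \<Longrightarrow> b \<notin> S \<Longrightarrow> a = g" and gV: "g \<in> V"
    and x: "x \<in> S" "x \<in> V" and y: "y \<in> V" "y \<notin> S"
  shows "d x y = d x g + d g y"
proof -
  have "d x g + d g y \<le> d x y"
    using cut_walk[of S g, OF ex gV d_walk[OF x(2) y(1)] x(1) y(2)] .
  moreover have "d x y \<le> d x g + d g y" using d_tri[OF x(2) gV y(1)] .
  ultimately show ?thesis by simp
qed

lemma separate:
  assumes br: "\<And>a b. E a b \<Longrightarrow> a \<in> S \<Longrightarrow> b \<notin> S \<Longrightarrow> a = g \<and> b = p"
    and S: "S \<subseteq> V" "g \<in> S" "p \<in> V" "p \<notin> S" "E g p"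
    and uv: "u \<in> V" "u \<notin> S" "v \<in> S" "r \<in> S" "r' \<in> V" "r' \<notin> S"
    and eq: "d u r = d v r" "d u r' = d v r'"
  shows False
proof -
  have br1: "\<And>a b. E a b \<Longrightarrow> a \<in> S \<Longrightarrow> b \<notin> S \<Longrightarrow> a = g" using br by blast
  have br2: "\<And>a b. E a b \<Longrightarrow> a \<in> V - S \<Longrightarrow> b \<notin> V - S \<Longrightarrow> a = p"
  proof -
    fix a b assume "E a b" "a \<in> V - S" "b \<notin> V - S"
    then have "E b a" "b \<in> S" "a \<notin> S" using sym inV by auto
    then show "a = p" using br by blast
  qed
  have gV: "g \<in> V" "v \<in> V" "r \<in> V" using S uv by auto
  have pg: "p \<noteq> g" using S by auto
  have "d g p \<le> 1" using d_edge[OF S(5)] .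
  moreover have "d g p \<noteq> 0" using d_zero[OF gV(1) S(3)] pg by auto
  ultimately have dgp: "d g p = 1" by simp
  have dpg: "d p g = 1" using dgp d_sym[OF gV(1) S(3)] by simp
  have pS: "p \<in> V - S" using S by blast
  have 1: "d v r' = d v g + d g r'" using cut[of S g, OF br1 gV(1) uv(3) gV(2) uv(5,6)] .
  have r'S: "r' \<in> V - S" using uv by blast
  have gS: "g \<notin> V - S" using S by blast
  have 2: "d r' g = d r' p + d p g"
    using cut[of "V - S" p, OF br2 S(3) r'S uv(5) gV(1) gS] .
  have 3: "d u r' \<le> d u p + d p r'" using d_tri[OF uv(1) S(3) uv(5)] .
  have s1: "d g r' = d r' g" using d_sym[OF gV(1) uv(5)] .
  have s2: "d p r' = d r' p" using d_sym[OF S(3) uv(5)] .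
  have A: "d v g + 1 \<le> d u p" using 1 2 3 s1 s2 eq(2) dpg by linarith
  have uS: "u \<in> V - S" using uv by blast
  have rS: "r \<notin> V - S" using uv by blast
  have 4: "d u r = d u p + d p r"
    using cut[of "V - S" p, OF br2 S(3) uS uv(1) gV(3) rS] .
  have 5: "d r p = d r g + d g p"
    using cut[of S g, OF br1 gV(1) uv(4) gV(3) S(3,4)] .
  have 6: "d v r \<le> d v g + d g r" using d_tri[OF gV(2) gV(1) gV(3)] .
  have s3: "d p r = d r p" using d_sym[OF S(3) gV(3)] .
  have s4: "d g r = d r g" using d_sym[OF gV(1) gV(3)] .
  have "d u p + 1 \<le> d v g" using 4 5 6 s3 s4 eq(1) dgp by linarith
  then show False using A by simp
qed

lemma aut:
  assumes s1: "\<And>x. x \<in> V \<Longrightarrow> \<sigma> x \<in> V" and s2: "\<And>x y. E x y \<Longrightarrow> E (\<sigma> x) (\<sigma> y)"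
    and s3: "\<And>x. x \<in> V \<Longrightarrow> \<sigma> (\<sigma> x) = x" and ab: "a \<in> V" "b \<in> V"
  shows "d (\<sigma> a) (\<sigma> b) = d a b"
proof -
  have w: "W x y m \<Longrightarrow> W (\<sigma> x) (\<sigma> y) m" for x y m
  proof (induction m arbitrary: x)
    case 0 then have xy: "x = y \<and> x \<in> V" using walk0 by metis
    then have "\<sigma> x \<in> V" using s1 by blast
    then show ?case using xy walk0 by metis
  next
    case (Suc m)
    from walk_uncons[OF Suc.prems(1)] obtain w where w: "E x w" "x \<in> V" "W w y m" by blast
    have "W (\<sigma> w) (\<sigma> y) m" using Suc.IH[OF w(3)] .
    then show ?case using walk_cons[of E "\<sigma> x" "\<sigma> w" V "\<sigma> y" m] s1 s2 w by blast
  qed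
  have "d (\<sigma> a) (\<sigma> b) \<le> d a b" using d_le[OF w[OF d_walk[OF ab]]] .
  moreover have "d (\<sigma> (\<sigma> a)) (\<sigma> (\<sigma> b)) \<le> d (\<sigma> a) (\<sigma> b)"
    using d_le[OF w[OF d_walk[OF s1[OF ab(1)] s1[OF ab(2)]]]] .
  then have "d a b \<le> d (\<sigma> a) (\<sigma> b)" using s3 ab by simp
  ultimately show ?thesis by simp
qed

end


definition leaves :: "nat \<Rightarrow> nat \<Rightarrow> nat list set" where
  "leaves n k = {xs. length xs = k - 1 \<and> (\<forall>a\<in>set xs. a < n) \<and> (\<forall>a\<in>set (tl xs). a \<noteq> 0)}"

definition subt :: "nat \<Rightarrow> nat \<Rightarrow> nat list \<Rightarrow> (nat list \<times> nat) set" where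
  "subt n k zs = {w \<in> lcg_V n k. \<exists>t. fst w = zs @ t}"

lemma V_iff: "(xs, i) \<in> lcg_V n k \<longleftrightarrow> i < n \<and> length xs \<le> k - 1 \<and> (\<forall>a\<in>set xs. a < n) \<and> (\<forall>a\<in>set (tl xs). a \<noteq> 0)"
  by (simp add: lcg_V_def)

locale lcg =
  fixes n k :: nat
  assumes n3: "3 \<le> n" and k2: "2 \<le> k"
begin

abbreviation "VV \<equiv> lcg_V n k"
abbreviation "EE \<equiv> lcg_E n k"

lemma V_pos: "(xs, i) \<in> VV \<Longrightarrow> j < n \<Longrightarrow> (xs, j) \<in> VV"
  by (simp add: V_iff)

lemma V_parent: "(ys @ [a], i) \<in> VV \<Longrightarrow> (ys, a) \<in> VV \<and> (ys \<noteq> [] \<longrightarrow> a \<noteq> 0)"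
proof -
  assume h: "(ys @ [a], i) \<in> VV"
  have tl: "ys \<noteq> [] \<Longrightarrow> tl (ys @ [a]) = tl ys @ [a]" by (cases ys) simp_all
  show ?thesis
  proof (cases "ys = []")
    case True then show ?thesis using h n3 by (simp add: V_iff)
  next
    case False
    then show ?thesis using h tl[OF False] by (simp add: V_iff)
  qed
qed

lemma E_parent: "(ys @ [a], i) \<in> VV \<Longrightarrow> EE (ys, a) (ys @ [a], 0)"
proof -
  assume h: "(ys @ [a], i) \<in> VV"
  have p: "(ys, a) \<in> VV \<and> (ys \<noteq> [] \<longrightarrow> a \<noteq> 0)" using V_parent[OF h] .
  have c: "(ys @ [a], 0) \<in> VV" using V_pos[OF h, of 0] n3 by simp
  have "ys = [] \<or> a \<noteq> 0" using p by blast
  then have "lcg_adj0 n (ys, a) (ys @ [a], 0)" unfolding lcg_adj0_def by simp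
  then show ?thesis unfolding lcg_E_def using p c by simp
qed

lemma E_cyc: "(xs, i) \<in> VV \<Longrightarrow> EE (xs, i) (xs, (i + 1) mod n)"
proof -
  assume h: "(xs, i) \<in> VV"
  have c: "(xs, (i + 1) mod n) \<in> VV" using V_pos[OF h, of "(i + 1) mod n"] n3 by simp
  have "lcg_adj0 n (xs, i) (xs, (i + 1) mod n)" unfolding lcg_adj0_def by simp
  then show ?thesis unfolding lcg_E_def using h c by simp
qed

lemma E_sym: "EE x y \<Longrightarrow> EE y x"
  unfolding lcg_E_def by blast

lemma E_V: "EE x y \<Longrightarrow> x \<in> VV \<and> y \<in> VV"
  unfolding lcg_E_def by blast

lemma root_V: "([], 0) \<in> VV"
  using n3 by (simp add: V_iff)

lemma cyc_walk0: "(xs, i) \<in> VV \<Longrightarrow> walk_of_len VV EE (xs, i) (xs, (i + m) mod n) m"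
proof (induction m)
  case 0 then show ?case by (simp add: walk0 V_iff)
next
  case (Suc m)
  have "(xs, (i + m) mod n) \<in> VV" using Suc.prems V_pos n3 by simp
  then have "EE (xs, (i + m) mod n) (xs, (i + Suc m) mod n)"
    using E_cyc[of xs "(i + m) mod n"] by (simp add: mod_Suc_eq)
  then have B: "walk_of_len VV EE (xs, (i + m) mod n) (xs, (i + Suc m) mod n) 1"
    using walk_edge_gen[of EE _ _ VV] E_V by blast
  have A: "walk_of_len VV EE (xs, i) (xs, (i + m) mod n) m" using Suc.IH[OF Suc.prems] .
  have "walk_of_len VV EE (xs, i) (xs, (i + Suc m) mod n) (m + 1)" using walk_app_gen[OF A B] .
  then show ?case by simp
qed

lemma reach0: "(xs, i) \<in> VV \<Longrightarrow> \<exists>m. walk_of_len VV EE (xs, i) ([], 0) m"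
proof (induction xs arbitrary: i rule: rev_induct)
  case Nil
  have "(i + (n - i)) mod n = 0" using Nil by (simp add: V_iff)
  then show ?case using cyc_walk0[OF Nil, of "n - i"] by metis
next
  case (snoc a ys)
  have w1: "walk_of_len VV EE (ys @ [a], i) (ys @ [a], 0) (n - i)"
    using cyc_walk0[OF snoc.prems, of "n - i"] snoc.prems by (simp add: V_iff)
  have p: "(ys, a) \<in> VV" using V_parent snoc.prems by blast
  have e: "EE (ys @ [a], 0) (ys, a)" using E_sym[OF E_parent[OF snoc.prems]] .
  have e1: "walk_of_len VV EE (ys @ [a], 0) (ys, a) 1"
    using walk_edge_gen[of EE _ _ VV, OF e] E_V[OF e] by blast
  obtain m where mw: "walk_of_len VV EE (ys, a) ([], 0) m" using snoc.IH[OF p] by blast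
  show ?case using walk_app_gen[OF w1 walk_app_gen[OF e1 mw]] by blast
qed

sublocale sg VV EE "([], 0)"
proof
  show "\<And>x y. EE x y \<Longrightarrow> EE y x" by (rule E_sym)
  show "\<And>x y. EE x y \<Longrightarrow> x \<in> VV \<and> y \<in> VV" by (rule E_V)
  show "([], 0) \<in> VV" by (rule root_V)
  show "\<And>x. x \<in> VV \<Longrightarrow> \<exists>m. walk_of_len VV EE x ([], 0) m" using reach0 by auto
qed

lemma cyc_walk: "(xs, i) \<in> VV \<Longrightarrow> W (xs, i) (xs, (i + m) mod n) m"
  by (rule cyc_walk0)

abbreviation "S \<equiv> subt n k"

lemma sub_bridge:
  assumes z: "(zs, i0) \<in> VV" "zs \<noteq> []" and e: "EE a b" and a: "a \<in> S zs" and b: "b \<notin> S zs"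
  shows "a = (zs, 0) \<and> b = (butlast zs, last zs)"
proof -
  obtain as x bs y where ab: "a = (as, x)" "b = (bs, y)" by fastforce
  have bV: "b \<in> VV" and aV: "a \<in> VV" using e E_V by auto
  obtain t where t: "as = zs @ t" using a ab unfolding subt_def by auto
  have nb: "\<not> (\<exists>t. bs = zs @ t)" using b bV ab unfolding subt_def by auto
  have "lcg_adj0 n a b \<or> lcg_adj0 n b a" using e unfolding lcg_E_def by auto
  then have c: "as = bs @ [y] \<and> x = 0" using t nb ab unfolding lcg_adj0_def by auto
  show ?thesis
  proof (cases t rule: rev_exhaust)
    case Nil
    then show ?thesis using c t ab by auto
  next
    case (snoc t' q)
    then have "bs = zs @ t'" using c t by simp
    then show ?thesis using nb by blast
  qed
qed

lemma sub_facts: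
  assumes z: "(zs, i0) \<in> VV" "zs \<noteq> []"
  shows "S zs \<subseteq> VV" "(zs, 0) \<in> S zs" "(butlast zs, last zs) \<in> VV"
    "(butlast zs, last zs) \<notin> S zs" "EE (zs, 0) (butlast zs, last zs)"
proof -
  show "S zs \<subseteq> VV" unfolding subt_def by auto
  show "(zs, 0) \<in> S zs" using V_pos[OF z(1), of 0] n3 unfolding subt_def by auto
  have zs: "zs = butlast zs @ [last zs]" using z(2) by simp
  then show "(butlast zs, last zs) \<in> VV" using V_parent[of "butlast zs" "last zs" i0] z by simp
  show "(butlast zs, last zs) \<notin> S zs"
  proof
    assume "(butlast zs, last zs) \<in> S zs"
    then obtain t where "butlast zs = zs @ t" unfolding subt_def by auto
    then have "length (butlast zs) \<ge> length zs" by simp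
    moreover have "length (butlast zs) = length zs - 1" by simp
    moreover have "length zs \<noteq> 0" using z(2) by simp
    ultimately show False by linarith
  qed
  show "EE (zs, 0) (butlast zs, last zs)" using E_sym E_parent[of "butlast zs" "last zs" i0] zs z
    by metis
qed

definition "R0 = (\<lambda>xs. (xs, 1::nat)) ` leaves n k"

lemma R0_V: "R0 \<subseteq> VV"
  using n3 unfolding R0_def leaves_def by (auto simp: V_iff)

lemma ext_land:
  assumes "(zs, i) \<in> VV"
  shows "(zs @ replicate (k - 1 - length zs) 1, 1) \<in> R0 \<inter> S zs"
proof -
  have l: "zs @ replicate (k - 1 - length zs) 1 \<in> leaves n k"
    using assms n3 unfolding leaves_def
    by (cases zs) (auto simp: V_iff)
  then show ?thesis unfolding R0_def subt_def using R0_V[unfolded R0_def] by auto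
qed

lemma out_land:
  assumes "zs \<noteq> []"
  shows "\<exists>r. r \<in> R0 \<and> r \<notin> S zs"
proof -
  define o1 where "o1 = (if hd zs = 0 then 1 else (0::nat))"
  have l: "o1 # replicate (k - 2) 1 \<in> leaves n k"
    using n3 k2 unfolding leaves_def o1_def by auto
  have "(o1 # replicate (k - 2) 1, 1) \<notin> S zs"
    using assms unfolding subt_def o1_def by (cases zs) auto
  then show ?thesis using l unfolding R0_def by blast
qed


lemma leaf_S: "length xs = k - 1 \<Longrightarrow> w \<in> S xs \<longleftrightarrow> w \<in> VV \<and> fst w = xs"
proof
  assume l: "length xs = k - 1" and w: "w \<in> S xs"
  obtain t where t: "fst w = xs @ t" and wV: "w \<in> VV" using w unfolding subt_def by auto
  obtain ws i where "w = (ws, i)" by fastforce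
  then have "length (fst w) \<le> k - 1" using wV by (simp add: V_iff)
  then have "t = []" using t l by simp
  then show "w \<in> VV \<and> fst w = xs" using t wV by simp
next
  assume "w \<in> VV \<and> fst w = xs"
  then show "w \<in> S xs" unfolding subt_def by auto
qed

lemma sub_bridge1:
  assumes "(zs, i0) \<in> VV" "zs \<noteq> []"
  shows "\<And>a b. EE a b \<Longrightarrow> a \<in> S zs \<Longrightarrow> b \<notin> S zs \<Longrightarrow> a = (zs, 0)"
  using sub_bridge[OF assms] by blast

lemma sub_bridge2:
  assumes "(zs, i0) \<in> VV" "zs \<noteq> []"
  shows "\<And>a b. EE a b \<Longrightarrow> a \<in> VV - S zs \<Longrightarrow> b \<notin> VV - S zs \<Longrightarrow> a = (butlast zs, last zs)"
proof -
  fix a b assume "EE a b" "a \<in> VV - S zs" "b \<notin> VV - S zs"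
  then have "EE b a" "b \<in> S zs" "a \<notin> S zs" using E_sym E_V by auto
  then show "a = (butlast zs, last zs)" using sub_bridge[OF assms] by blast
qed

lemma adj_same:
  assumes "EE x y" "fst x = fst y"
  shows "snd y = (snd x + 1) mod n \<or> snd x = (snd y + 1) mod n"
proof -
  have "lcg_adj0 n x y \<or> lcg_adj0 n y x" using assms(1) unfolding lcg_E_def by blast
  then show ?thesis using assms(2) unfolding lcg_adj0_def by auto
qed

lemma snd_lt: "w \<in> VV \<Longrightarrow> snd w < n"
  by (cases w) (simp add: V_iff)

lemma leaf_d:
  assumes x0: "(xs, 0) \<in> VV" and l: "length xs = k - 1" and a: "a < n" and t: "t < n"
  shows "gdist VV EE (xs, a) (xs, t) = cdist n a t"
proof -
  have xne: "xs \<noteq> []" using l k2 by auto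
  have aV: "(xs, a) \<in> VV" and tV: "(xs, t) \<in> VV" using V_pos[OF x0] a t by auto
  have m1: "(a + (t + n - a) mod n) mod n = t"
  proof -
    have "(a + (t + n - a) mod n) mod n = (a + (t + n - a)) mod n" by (simp add: mod_add_right_eq)
    also have "a + (t + n - a) = t + n" using a by simp
    finally show ?thesis using t by simp
  qed
  have m2: "(t + (a + n - t) mod n) mod n = a"
  proof -
    have "(t + (a + n - t) mod n) mod n = (t + (a + n - t)) mod n" by (simp add: mod_add_right_eq)
    also have "t + (a + n - t) = a + n" using t by simp
    finally show ?thesis using a by simp
  qed
  have u1: "gdist VV EE (xs, a) (xs, t) \<le> (t + n - a) mod n"
    using d_le[OF cyc_walk[OF aV, of "(t + n - a) mod n"]] m1 by simp
  have u2: "gdist VV EE (xs, t) (xs, a) \<le> (a + n - t) mod n"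
    using d_le[OF cyc_walk[OF tV, of "(a + n - t) mod n"]] m2 by simp
  have "gdist VV EE (xs, a) (xs, t) = gdist VV EE (xs, t) (xs, a)" using d_sym[OF aV tV] .
  then have up: "gdist VV EE (xs, a) (xs, t) \<le> cdist n a t" using u1 u2 cdist_eq[OF a t] by simp
  define \<phi> where "\<phi> w = (if fst w = xs then cdist n (snd w) t else cdist n 0 t + 1)" for w
  have lip: "\<phi> x \<le> \<phi> y + 1" if e: "EE x y" for x y
  proof -
    have xV: "x \<in> VV" and yV: "y \<in> VV" using E_V[OF e] by auto
    show ?thesis
    proof (cases "fst x = xs")
      case xin: True
      show ?thesis
      proof (cases "fst y = xs")
        case True
        have o: "snd y = (snd x + 1) mod n \<or> snd x = (snd y + 1) mod n"
          using adj_same[OF e] xin True by simp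
        have lx: "snd x < n" using snd_lt[OF xV] .
        have ly: "snd y < n" using snd_lt[OF yV] .
        from o show ?thesis
        proof
          assume "snd y = (snd x + 1) mod n"
          then show ?thesis using cdist_lip[OF lx t] xin True unfolding \<phi>_def by simp
        next
          assume "snd x = (snd y + 1) mod n"
          then show ?thesis using cdist_lip[OF ly t] xin True unfolding \<phi>_def by simp
        qed
      next
        case False
        have "x \<in> S xs" using leaf_S[OF l] xV xin by simp
        moreover have "y \<notin> S xs" using leaf_S[OF l] False by simp
        ultimately have "x = (xs, 0)" using sub_bridge1[OF x0 xne e] by blast
        then show ?thesis using False unfolding \<phi>_def by simp
      qed
    next
      case xout: False
      show ?thesis
      proof (cases "fst y = xs")
        case True
        have "y \<in> S xs" using leaf_S[OF l] yV True by simp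
        moreover have "x \<notin> S xs" using leaf_S[OF l] xout by simp
        ultimately have "y = (xs, 0)" using sub_bridge1[OF x0 xne E_sym[OF e]] by blast
        then show ?thesis using xout unfolding \<phi>_def by simp
      next
        case False
        then show ?thesis using xout unfolding \<phi>_def by simp
      qed
    qed
  qed
  have "\<phi> (xs, t) = 0" unfolding \<phi>_def by (simp add: cdist_self)
  then have "\<phi> (xs, a) \<le> gdist VV EE (xs, a) (xs, t)" using lower_d[of \<phi> "(xs, t)" "(xs, a)"] lip aV tV by blast
  then have "cdist n a t \<le> gdist VV EE (xs, a) (xs, t)" unfolding \<phi>_def by simp
  then show ?thesis using up by simp
qed


lemma need_land:
  assumes R: "resolving VV EE R" and xl: "xs \<in> leaves n k"
  shows "\<exists>r\<in>R. fst r = xs \<and> snd r \<noteq> 0"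
proof (rule ccontr)
  assume no: "\<not> (\<exists>r\<in>R. fst r = xs \<and> snd r \<noteq> 0)"
  have l: "length xs = k - 1" using xl unfolding leaves_def by simp
  have x0: "(xs, 0) \<in> VV" using xl n3 unfolding leaves_def by (simp add: V_iff)
  have xne: "xs \<noteq> []" using l k2 by auto
  define \<sigma> where "\<sigma> w = (if fst w = xs then (xs, (n - snd w) mod n) else w)" for w
  have s1: "\<sigma> x \<in> VV" if "x \<in> VV" for x
  proof (cases "fst x = xs")
    case True
    have "(n - snd x) mod n < n" using n3 by simp
    then show ?thesis using V_pos[OF x0] True unfolding \<sigma>_def by simp
  next
    case False then show ?thesis using that unfolding \<sigma>_def by simp
  qed
  have s3: "\<sigma> (\<sigma> x) = x" if "x \<in> VV" for x
  proof (cases "fst x = xs")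
    case True
    have "(n - (n - snd x) mod n) mod n = snd x" using refl_inv snd_lt[OF that] by blast
    then show ?thesis using True unfolding \<sigma>_def by (cases x) simp
  next
    case False then show ?thesis unfolding \<sigma>_def by simp
  qed
  have fix0: "\<sigma> (xs, 0) = (xs, 0)" unfolding \<sigma>_def by simp
  have s2: "EE (\<sigma> x) (\<sigma> y)" if e: "EE x y" for x y
  proof -
    have xV: "x \<in> VV" and yV: "y \<in> VV" using E_V[OF e] by auto
    show ?thesis
    proof (cases "fst x = xs")
      case xin: True
      show ?thesis
      proof (cases "fst y = xs")
        case True
        have o: "snd y = (snd x + 1) mod n \<or> snd x = (snd y + 1) mod n"
          using adj_same[OF e] xin True by simp
        have lx: "snd x < n" using snd_lt[OF xV] .
        have ly: "snd y < n" using snd_lt[OF yV] .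
        have sx: "\<sigma> x = (xs, (n - snd x) mod n)" and sy: "\<sigma> y = (xs, (n - snd y) mod n)"
          using xin True unfolding \<sigma>_def by auto
        have "lcg_adj0 n (\<sigma> y) (\<sigma> x) \<or> lcg_adj0 n (\<sigma> x) (\<sigma> y)"
          using o
        proof
          assume h: "snd y = (snd x + 1) mod n"
          have "(n - snd x) mod n = ((n - snd y) mod n + 1) mod n"
            using refl_arith[OF n3 lx] h by simp
          then show ?thesis unfolding sx sy lcg_adj0_def by simp
        next
          assume h: "snd x = (snd y + 1) mod n"
          have "(n - snd y) mod n = ((n - snd x) mod n + 1) mod n"
            using refl_arith[OF n3 ly] h by simp
          then show ?thesis unfolding sx sy lcg_adj0_def by simp
        qed
        then show ?thesis unfolding lcg_E_def using s1[OF xV] s1[OF yV] by blast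
      next
        case False
        have "x \<in> S xs" using leaf_S[OF l] xV xin by simp
        moreover have "y \<notin> S xs" using leaf_S[OF l] False by simp
        ultimately have "x = (xs, 0)" using sub_bridge1[OF x0 xne e] by blast
        moreover have "\<sigma> y = y" using False unfolding \<sigma>_def by simp
        ultimately show ?thesis using e fix0 by simp
      qed
    next
      case xout: False
      have sx: "\<sigma> x = x" using xout unfolding \<sigma>_def by simp
      show ?thesis
      proof (cases "fst y = xs")
        case True
        have "y \<in> S xs" using leaf_S[OF l] yV True by simp
        moreover have "x \<notin> S xs" using leaf_S[OF l] xout by simp
        ultimately have "y = (xs, 0)" using sub_bridge1[OF x0 xne E_sym[OF e]] by blast
        then show ?thesis using e fix0 sx by simp
      next
        case False
        then have "\<sigma> y = y" unfolding \<sigma>_def by simp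
        then show ?thesis using e sx by simp
      qed
    qed
  qed
  define u where "u = (xs, 1::nat)"
  define v where "v = (xs, n - 1)"
  have uV: "u \<in> VV" and vV: "v \<in> VV" using V_pos[OF x0] n3 unfolding u_def v_def by auto
  have su: "\<sigma> u = v" unfolding u_def v_def \<sigma>_def using n3 by simp
  have RV: "R \<subseteq> VV" using R unfolding resolving_def by blast
  have "gdist VV EE u r = gdist VV EE v r" if r: "r \<in> R" for r
  proof -
    have rV: "r \<in> VV" using RV r by blast
    have "\<sigma> r = r"
    proof (cases "fst r = xs")
      case True
      then have "snd r = 0" using no r by blast
      then show ?thesis using True unfolding \<sigma>_def by (cases r) simp
    next
      case False then show ?thesis unfolding \<sigma>_def by simp
    qed
    then show ?thesis using aut[of \<sigma> u r, OF s1 s2 s3 uV rV] su by simp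
  qed
  then have "u = v" using R uV vV unfolding resolving_def by blast
  then show False using n3 unfolding u_def v_def by simp
qed


lemma sep_sub:
  assumes z: "(zs, i0) \<in> VV" "zs \<noteq> []" and u: "u \<in> VV" "u \<notin> S zs" and v: "v \<in> S zs"
    and eq: "\<forall>r\<in>R0. gdist VV EE u r = gdist VV EE v r"
  shows False
proof -
  obtain r where r: "r \<in> R0" "r \<in> S zs" using ext_land[OF z(1)] by blast
  obtain r' where r': "r' \<in> R0" "r' \<notin> S zs" using out_land[OF z(2)] by blast
  have r'V: "r' \<in> VV" using R0_V r'(1) by blast
  show False
    using separate[of "S zs" "(zs, 0)" "(butlast zs, last zs)" u v r r', OF sub_bridge[OF z]
        sub_facts(1,2,3,4,5)[OF z] u v r(2) r'V r'(2)] eq r(1) r'(1) by blast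
qed

lemma res_R0: "resolving VV EE R0"
  unfolding resolving_def
proof (intro conjI ballI impI)
  show "R0 \<subseteq> VV" by (rule R0_V)
  fix u v assume uV: "u \<in> VV" and vV: "v \<in> VV" and eq: "\<forall>r\<in>R0. gdist VV EE u r = gdist VV EE v r"
  obtain xs i where ux: "u = (xs, i)" by fastforce
  obtain ys j where vy: "v = (ys, j)" by fastforce
  have eq': "\<forall>r\<in>R0. gdist VV EE v r = gdist VV EE u r" using eq by simp
  show "u = v"
  proof (cases "xs = ys")
    case False
    show ?thesis
    proof (cases "\<exists>t. xs = ys @ t")
      case False
      have yne: "ys \<noteq> []" using False by auto
      have "u \<notin> S ys" using False ux unfolding subt_def by auto
      moreover have "v \<in> S ys" using vV vy unfolding subt_def by auto
      ultimately show ?thesis using sep_sub[of ys j u v] vV[unfolded vy] yne uV eq vy by blast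
    next
      case True
      then obtain t where t: "xs = ys @ t" by blast
      then have tne: "t \<noteq> []" using \<open>xs \<noteq> ys\<close> by auto
      have "\<not> (\<exists>t'. ys = xs @ t')"
      proof
        assume "\<exists>t'. ys = xs @ t'"
        then obtain t' where "ys = xs @ t'" by blast
        then have "length ys \<ge> length xs" by simp
        moreover have "length xs > length ys" using t tne by simp
        ultimately show False by simp
      qed
      then have "v \<notin> S xs" using vy unfolding subt_def by auto
      moreover have "u \<in> S xs" using uV ux unfolding subt_def by auto
      moreover have xne: "xs \<noteq> []" using t tne by simp
      ultimately show ?thesis using sep_sub[of xs i v u] uV[unfolded ux] vV eq' ux by blast
    qed
  next
    case True
    have iV: "(xs, i) \<in> VV" using uV ux by simp
    have jV: "(xs, j) \<in> VV" using vV vy True by simp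
    have lk: "length xs \<le> k - 1" using iV by (simp add: V_iff)
    show ?thesis
    proof (cases "length xs = k - 1")
      case l: True
      have xne: "xs \<noteq> []" using l k2 by auto
      have x0: "(xs, 0) \<in> VV" using V_pos[OF iV] n3 by simp
      have xl: "xs \<in> leaves n k" using iV l unfolding leaves_def by (simp add: V_iff)
      have r1: "(xs, 1) \<in> R0" using xl unfolding R0_def by blast
      have i: "i < n" and j: "j < n" using iV jV by (simp_all add: V_iff)
      have "gdist VV EE u (xs, 1) = gdist VV EE v (xs, 1)" using eq r1 by blast
      then have "gdist VV EE (xs, i) (xs, 1) = gdist VV EE (xs, j) (xs, 1)" using ux vy True by simp
      moreover have "(1::nat) < n" using n3 by simp
      ultimately have e1: "cdist n i 1 = cdist n j 1"
        using leaf_d[OF x0 l i, of 1] leaf_d[OF x0 l j, of 1] by simp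
      obtain r' where r': "r' \<in> R0" "r' \<notin> S xs" using out_land[OF xne] by blast
      have r'V: "r' \<in> VV" using R0_V r'(1) by blast
      have g: "(xs, 0) \<in> S xs" using sub_facts(2)[OF iV xne] .
      have c1: "gdist VV EE (xs, i) r' = gdist VV EE (xs, i) (xs, 0) + gdist VV EE (xs, 0) r'"
        using cut[of "S xs" "(xs, 0)", OF sub_bridge1[OF iV xne] x0 _ iV r'V r'(2)] iV
        unfolding subt_def by auto
      have c2: "gdist VV EE (xs, j) r' = gdist VV EE (xs, j) (xs, 0) + gdist VV EE (xs, 0) r'"
        using cut[of "S xs" "(xs, 0)", OF sub_bridge1[OF iV xne] x0 _ jV r'V r'(2)] jV
        unfolding subt_def by auto
      have "gdist VV EE (xs, i) r' = gdist VV EE (xs, j) r'" using eq r'(1) ux vy True by simp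
      then have "gdist VV EE (xs, i) (xs, 0) = gdist VV EE (xs, j) (xs, 0)" using c1 c2 by simp
      then have e0: "cdist n i 0 = cdist n j 0"
        using leaf_d[OF x0 l i] leaf_d[OF x0 l j] n3 by simp
      have "i = j" using cdist_sep[OF n3 i j e1 e0] .
      then show ?thesis using ux vy True by simp
    next
      case False
      then have lt: "length xs < k - 1" using lk by simp
      show ?thesis
      proof (cases "xs \<noteq> [] \<and> i = 0")
        case True
        then have xne: "xs \<noteq> []" and i0: "i = 0" by auto
        obtain r' where r': "r' \<in> R0" "r' \<notin> S xs" using out_land[OF xne] by blast
        have r'V: "r' \<in> VV" using R0_V r'(1) by blast
        have x0: "(xs, 0) \<in> VV" using V_pos[OF iV] n3 by simp
        have c1: "gdist VV EE (xs, i) r' = gdist VV EE (xs, i) (xs, 0) + gdist VV EE (xs, 0) r'"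
          using cut[of "S xs" "(xs, 0)", OF sub_bridge1[OF iV xne] x0 _ iV r'V r'(2)] iV
          unfolding subt_def by auto
        have c2: "gdist VV EE (xs, j) r' = gdist VV EE (xs, j) (xs, 0) + gdist VV EE (xs, 0) r'"
          using cut[of "S xs" "(xs, 0)", OF sub_bridge1[OF iV xne] x0 _ jV r'V r'(2)] jV
          unfolding subt_def by auto
        have "gdist VV EE (xs, i) r' = gdist VV EE (xs, j) r'" using eq r'(1) ux vy \<open>xs = ys\<close> by simp
        then have "gdist VV EE (xs, j) (xs, 0) = gdist VV EE (xs, i) (xs, 0)" using c1 c2 by simp
        also have "\<dots> = 0" using d_refl[OF iV] i0 by simp
        finally have "(xs, j) = (xs, 0)" using d_zero[OF jV x0] by blast
        then show ?thesis using ux vy True i0 \<open>xs = ys\<close> by simp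
      next
        case False
        define zs where "zs = xs @ [i]"
        have i: "i < n" using iV by (simp add: V_iff)
        have tl: "\<forall>a\<in>set (tl zs). a \<noteq> 0"
        proof (cases "xs = []")
          case True then show ?thesis unfolding zs_def by simp
        next
          case xne: False
          then have "i \<noteq> 0" using False by simp
          moreover have "tl zs = tl xs @ [i]" unfolding zs_def using xne by (cases xs) auto
          ultimately show ?thesis using iV by (simp add: V_iff)
        qed
        have z0: "(zs, 0) \<in> VV" using iV lt tl n3 unfolding zs_def by (simp add: V_iff)
        have zne: "zs \<noteq> []" unfolding zs_def by simp
        have p: "(butlast zs, last zs) = (xs, i)" unfolding zs_def by simp
        obtain r where r: "r \<in> R0" "r \<in> S zs" using ext_land[OF z0] by blast
        have rV: "r \<in> VV" using R0_V r(1) by blast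
        have nS: "(xs, a) \<notin> S zs" for a
        proof
          assume "(xs, a) \<in> S zs"
          then obtain t where "xs = zs @ t" unfolding subt_def by auto
          then have "length xs = length xs + 1 + length t" unfolding zs_def by simp
          then show False by simp
        qed
        have iS: "(xs, i) \<in> VV - S zs" and jS: "(xs, j) \<in> VV - S zs" using iV jV nS by auto
        have rS: "r \<notin> VV - S zs" using r by blast
        have c1: "gdist VV EE (xs, i) r = gdist VV EE (xs, i) (xs, i) + gdist VV EE (xs, i) r"
          using cut[of "VV - S zs" "(butlast zs, last zs)", OF sub_bridge2[OF z0 zne] _ iS iV rV rS]
            p iV by simp
        have c2: "gdist VV EE (xs, j) r = gdist VV EE (xs, j) (xs, i) + gdist VV EE (xs, i) r"
          using cut[of "VV - S zs" "(butlast zs, last zs)", OF sub_bridge2[OF z0 zne] _ jS jV rV rS]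
            p iV by simp
        have "gdist VV EE (xs, i) r = gdist VV EE (xs, j) r" using eq r(1) ux vy \<open>xs = ys\<close> by simp
        then have "gdist VV EE (xs, j) (xs, i) = 0" using c1 c2 d_refl[OF iV] by simp
        then have "(xs, j) = (xs, i)" using d_zero[OF jV iV] by blast
        then show ?thesis using ux vy True by simp
      qed
    qed
  qed
qed


end

lemma leaves_eq:
  assumes k: "2 \<le> k"
  shows "leaves n k = (\<lambda>(a, ys). a # ys) ` ({..<n} \<times> {ys. set ys \<subseteq> {1..<n} \<and> length ys = k - 2})"
proof
  show "leaves n k \<subseteq> (\<lambda>(a, ys). a # ys) ` ({..<n} \<times> {ys. set ys \<subseteq> {1..<n} \<and> length ys = k - 2})"
  proof
    fix xs assume xs: "xs \<in> leaves n k"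
    then have l: "length xs = Suc (k - 2)" using k unfolding leaves_def by simp
    then obtain a ys where a: "xs = a # ys" by (cases xs) auto
    have "a < n" "set ys \<subseteq> {1..<n}" "length ys = k - 2"
      using xs a l unfolding leaves_def by auto
    then show "xs \<in> (\<lambda>(a, ys). a # ys) ` ({..<n} \<times> {ys. set ys \<subseteq> {1..<n} \<and> length ys = k - 2})"
      using a by force
  qed
next
  show "(\<lambda>(a, ys). a # ys) ` ({..<n} \<times> {ys. set ys \<subseteq> {1..<n} \<and> length ys = k - 2}) \<subseteq> leaves n k"
    using k unfolding leaves_def by auto
qed

lemma card_leaves:
  assumes k: "2 \<le> k"
  shows "finite (leaves n k) \<and> card (leaves n k) = n * (n - 1) ^ (k - 2)"
proof -
  let ?B = "{ys. set ys \<subseteq> {1..<n} \<and> length ys = k - 2}"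
  have fB: "finite ?B" using finite_lists_length_eq[of "{1..<n}"] by simp
  have cB: "card ?B = (n - 1) ^ (k - 2)" using card_lists_length_eq[of "{1..<n}"] by simp
  have inj: "inj_on (\<lambda>(a, ys). a # ys) ({..<n} \<times> ?B)" by (auto simp: inj_on_def)
  have "card (leaves n k) = card ({..<n} \<times> ?B)" using leaves_eq[OF k] card_image[OF inj] by simp
  also have "\<dots> = n * (n - 1) ^ (k - 2)" using cB by (simp add: card_cartesian_product)
  finally show ?thesis using leaves_eq[OF k] fB by simp
qed

theorem theorem3:
  fixes n k :: nat
  assumes "n \<ge> 3" and "k \<ge> 2"
  shows "metric_dim (lcg_V n k) (lcg_E n k) = n * (n - 1) ^ (k - 2)"
proof -
  interpret lcg n k using assms by unfold_locales
  have fc: "finite (leaves n k)" "card (leaves n k) = n * (n - 1) ^ (k - 2)"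
    using card_leaves[OF assms(2)] by auto
  have injR: "inj_on (\<lambda>xs. (xs, 1::nat)) (leaves n k)" by (auto simp: inj_on_def)
  have R0c: "card R0 = card (leaves n k)" unfolding R0_def using card_image[OF injR] .
  have R0f: "finite R0" unfolding R0_def using fc(1) by simp
  have lb: "card (leaves n k) \<le> m" if "\<exists>R. finite R \<and> resolving (lcg_V n k) (lcg_E n k) R \<and> card R = m" for m
  proof -
    from that obtain R where RR: "finite R \<and> resolving (lcg_V n k) (lcg_E n k) R \<and> card R = m"
      by (rule exE)
    have R: "finite R" "resolving (lcg_V n k) (lcg_E n k) R" "card R = m"
      using conjunct1[OF RR] conjunct1[OF conjunct2[OF RR]] conjunct2[OF conjunct2[OF RR]] by this+
    define f where "f xs = (SOME r. r \<in> R \<and> fst r = xs)" for xs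
    have f: "f xs \<in> R \<and> fst (f xs) = xs" if "xs \<in> leaves n k" for xs
    proof -
      have ex: "\<exists>r. r \<in> R \<and> fst r = xs" using need_land[OF R(2) that] by blast
      have "(SOME r. r \<in> R \<and> fst r = xs) \<in> R \<and> fst (SOME r. r \<in> R \<and> fst r = xs) = xs"
        using someI_ex[OF ex] .
      then show ?thesis unfolding f_def .
    qed
    have "inj_on f (leaves n k)"
    proof (rule inj_onI)
      fix x y assume x: "x \<in> leaves n k" and y: "y \<in> leaves n k" and e: "f x = f y"
      have "x = fst (f x)" using f[OF x] by simp
      also have "\<dots> = fst (f y)" using e by simp
      also have "\<dots> = y" using f[OF y] by simp
      finally show "x = y" .
    qed
    moreover have "f ` leaves n k \<subseteq> R" using f by blast
    ultimately have "card (leaves n k) \<le> card R" using card_inj_on_le[OF _ _ R(1)] by blast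
    then show ?thesis using R(3) by simp
  qed
  have "metric_dim (lcg_V n k) (lcg_E n k) = card (leaves n k)"
    unfolding metric_dim_def
  proof (rule Least_equality)
    show "\<exists>R. finite R \<and> resolving (lcg_V n k) (lcg_E n k) R \<and> card R = card (leaves n k)"
      using R0f res_R0 R0c by auto
    show "\<And>m. \<exists>R. finite R \<and> resolving (lcg_V n k) (lcg_E n k) R \<and> card R = m \<Longrightarrow> card (leaves n k) \<le> m"
      by (rule lb)
  qed
  then show ?thesis using fc(2) by simp
qed

end
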